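(* Let $\mathbb{K}$ be a field, $m=4$, and for $p\in\mathbf{Z}^2$ let $\langle p\rangle=\{q\in\mathbf{Z}^2:p\le q\le(10,10)\}$. Let $\mathcal W=\bigcup_{k=0}^{4}\langle(8-2k,2k)\rangle$, $x_1=(7,1)$, $x_2=(5,3)$, $x_3=(3,5)$, $x_4=(1,7)$. Define $\mathcal I_1=\mathcal W\cup\langle x_1\rangle\cup\langle x_2\rangle\cup\langle x_3\rangle\cup\langle x_4\rangle$, $\mathcal I_2=\mathcal W\cup\langle x_1-(1,1)\rangle\cup\langle x_2\rangle\cup\langle x_4\rangle$, $\mathcal I_3=\mathcal W\cup\langle x_1\rangle\cup\langle x_2-(1,1)\rangle\cup\langle x_3\rangle$, $\mathcal J_1=\mathcal W\cup\langle x_1\rangle\cup\langle x_2\rangle\cup\langle x_3\rangle\cup\langle x_4\rangle$, $\mathcal J_2=\mathcal W\cup\langle x_1\rangle\cup\langle x_3-(1,1)\rangle\cup\langle x_4\rangle$, $\mathcal J_3=\mathcal W\cup\langle x_2\rangle\cup\langle x_3\rangle\cup\langle x_4-(1,1)\rangle$, and $M=\bigoplus_{i=1}^3I^{\mathcal I_i}$, $N=\bigoplus_{j=1}^3I^{\mathcal J_j}$ as functors $\mathbf{Z}^2\to\mathbf{Vec}_{\mathbb{K}}$. Then $d_I(M,N)=1$ and $d_B(\mathcal B(M),\mathcal B(N))=2$, where $\mathcal B(M)=\{\mathcal I_1,\mathcal I_2,\mathcal I_3\}$ and $\mathcal B(N)=\{\mathcal J_1,\mathcal J_2,\mathcal 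J_3\}$.
   Context: $\mathbf{Z}^2$ has the product order. $I^{\mathcal J}$ is the interval module ($\mathbb{K}$ on $\mathcal J$, $0$ elsewhere, identity maps between points of $\mathcal J$, zero otherwise). For $\delta\in\{0,1,\dots\}$: $M(\delta)_a=M_{a+(\delta,\delta)}$, $f(\delta)_a=f_{a+(\delta,\delta)}$; $\phi^{2\delta}_M:M\to M(2\delta)$ is given by internal maps; a $\delta$-interleaving is $f:M\to N(\delta)$, $g:N\to M(\delta)$ with $g(\delta)\circ f=\phi^{2\delta}_M$ and $f(\delta)\circ g=\phi^{2\delta}_N$; $d_I(M,N)$ is the least such $\delta$. Intervals are $\delta$-interleaved if their interval modules are; $\mathcal J$ is $2\delta$-trivial if $I^{\mathcal J}$ is $\delta$-interleaved with $0$; $\mathcal C_{2\delta}$ is the multiset of intervals in $\mathcal C$ that are not $2\delta$-trivial. A $\delta$-matching between barcodes $\mathcal C,\mathcal D$ is a partial bijection $\sigma$ whose domain contains $\mathcal C_{2\delta}$, image contains $\mathcal D_{2\delta}$, and with $\sigma(\mathcal J)=\mathcal K$ implying $\mathcal J,\mathcal K$ are $\delta$-interleaved; $d_B(\mathcal C,\mathcal D)$ is the least $\delta\in\{0,1,\dots\}$ admitting a $\delta$-matching. *)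

theory Defs
  imports Main "HOL-Library.Extended_Nat"
begin

type_synonym pt = "int \<times> int"

definition le2 :: "pt \<Rightarrow> pt \<Rightarrow> bool" where
  "le2 a b \<longleftrightarrow> fst a \<le> fst b \<and> snd a \<le> snd b"

definition shiftp :: "nat \<Rightarrow> pt \<Rightarrow> pt" where
  "shiftp d a = (fst a + int d, snd a + int d)"

text \<open>A vector is a coordinate function nat => K; each fibre M_a is a set of such
  vectors (a subspace), and mp M a b is the internal map M_a -> M_b for a <= b.
  All modules occurring below (finite direct sums of interval modules, the zero module,
  and their shifts) are of this form; morphisms between them are arbitrary linear maps.\<close>

record 'k pmod =
  sp :: "pt \<Rightarrow> (nat \<Rightarrow> 'k) set"
  mp :: "pt \<Rightarrow> pt \<Rightarrow> (nat \<Rightarrow> 'k) \<Rightarrow> (nat \<Rightarrow> 'k)"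

definition linear_between :: "(nat \<Rightarrow> 'k::field) set \<Rightarrow> (nat \<Rightarrow> 'k) set
    \<Rightarrow> ((nat \<Rightarrow> 'k) \<Rightarrow> (nat \<Rightarrow> 'k)) \<Rightarrow> bool" where
  "linear_between A B h \<longleftrightarrow>
     (\<forall>x\<in>A. h x \<in> B) \<and>
     (\<forall>x\<in>A. \<forall>y\<in>A. h (\<lambda>i. x i + y i) = (\<lambda>i. h x i + h y i)) \<and>
     (\<forall>c. \<forall>x\<in>A. h (\<lambda>i. c * x i) = (\<lambda>i. c * h x i))"

definition is_morph :: "'k::field pmod \<Rightarrow> 'k pmod \<Rightarrow> (pt \<Rightarrow> (nat \<Rightarrow> 'k) \<Rightarrow> (nat \<Rightarrow> 'k)) \<Rightarrow> bool" where
  "is_morph M N f \<longleftrightarrow>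
     (\<forall>a. linear_between (sp M a) (sp N a) (f a)) \<and>
     (\<forall>a b. le2 a b \<longrightarrow> (\<forall>x\<in>sp M a. f b (mp M a b x) = mp N a b (f a x)))"

definition shift_mod :: "nat \<Rightarrow> 'k pmod \<Rightarrow> 'k pmod" where
  "shift_mod d M = \<lparr> sp = (\<lambda>a. sp M (shiftp d a)),
                     mp = (\<lambda>a b. mp M (shiftp d a) (shiftp d b)) \<rparr>"

definition interleaved :: "nat \<Rightarrow> 'k::field pmod \<Rightarrow> 'k pmod \<Rightarrow> bool" where
  "interleaved d M N \<longleftrightarrow>
     (\<exists>f g. is_morph M (shift_mod d N) f \<and> is_morph N (shift_mod d M) g \<and>
        (\<forall>a. \<forall>x\<in>sp M a. g (shiftp d a) (f a x) = mp M a (shiftp (2*d) a) x) \<and>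
        (\<forall>a. \<forall>x\<in>sp N a. f (shiftp d a) (g a x) = mp N a (shiftp (2*d) a) x))"

definition dI :: "'k::field pmod \<Rightarrow> 'k pmod \<Rightarrow> enat" where
  "dI M N = (INF d\<in>{d. interleaved d M N}. enat d)"

text \<open>Direct sum of the interval modules I^{Js!0}, ..., I^{Js!(n-1)}: coordinate i carries
  the i-th summand.\<close>
definition dirsum_intervals :: "pt set list \<Rightarrow> 'k::field pmod" where
  "dirsum_intervals Js = \<lparr> sp = (\<lambda>a. {x. \<forall>i. x i \<noteq> 0 \<longrightarrow> i < length Js \<and> a \<in> Js ! i}),
               mp = (\<lambda>a b x. (\<lambda>i. if i < length Js \<and> a \<in> Js ! i \<and> b \<in> Js ! i then x i else 0)) \<rparr>"

definition interval_module :: "pt set \<Rightarrow> 'k::field pmod" where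
  "interval_module J = dirsum_intervals [J]"

definition zero_module :: "'k::field pmod" where
  "zero_module = \<lparr> sp = (\<lambda>a. {\<lambda>i. 0}), mp = (\<lambda>a b x. (\<lambda>i. 0)) \<rparr>"

definition intervals_interleaved :: "'k::field itself \<Rightarrow> nat \<Rightarrow> pt set \<Rightarrow> pt set \<Rightarrow> bool" where
  "intervals_interleaved _ d J K \<longleftrightarrow>
     interleaved d (interval_module J :: 'k pmod) (interval_module K)"

text \<open>J is 2 delta-trivial iff I^J is delta-interleaved with 0.\<close>
definition trivial2 :: "'k::field itself \<Rightarrow> nat \<Rightarrow> pt set \<Rightarrow> bool" where
  "trivial2 _ d J \<longleftrightarrow> interleaved d (interval_module J :: 'k pmod) zero_module"

text \<open>Barcodes are multisets of intervals, given as indexed lists; a partial bijection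
  between the multisets is a partial bijection R between index sets.\<close>
definition matching :: "'k::field itself \<Rightarrow> nat \<Rightarrow> pt set list \<Rightarrow> pt set list \<Rightarrow> bool" where
  "matching T d C D \<longleftrightarrow>
     (\<exists>R :: (nat \<times> nat) set.
        R \<subseteq> {..<length C} \<times> {..<length D} \<and>
        (\<forall>i j j'. (i, j) \<in> R \<longrightarrow> (i, j') \<in> R \<longrightarrow> j = j') \<and>
        (\<forall>i i' j. (i, j) \<in> R \<longrightarrow> (i', j) \<in> R \<longrightarrow> i = i') \<and>
        (\<forall>i<length C. \<not> trivial2 T d (C ! i) \<longrightarrow> i \<in> Domain R) \<and>
        (\<forall>j<length D. \<not> trivial2 T d (D ! j) \<longrightarrow> j \<in> Range R) \<and>
        (\<forall>(i, j)\<in>R. intervals_interleaved T d (C ! i) (D ! j)))"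

definition dB :: "'k::field itself \<Rightarrow> pt set list \<Rightarrow> pt set list \<Rightarrow> enat" where
  "dB T C D = (INF d\<in>{d. matching T d C D}. enat d)"

definition up :: "pt \<Rightarrow> pt set" where
  "up p = {q. le2 p q \<and> le2 q (10, 10)}"

definition W :: "pt set" where
  "W = (\<Union>k\<in>{0..4::int}. up (8 - 2*k, 2*k))"

definition x1 :: pt where "x1 = (7, 1)"
definition x2 :: pt where "x2 = (5, 3)"
definition x3 :: pt where "x3 = (3, 5)"
definition x4 :: pt where "x4 = (1, 7)"

definition dm :: "pt \<Rightarrow> pt" where "dm p = (fst p - 1, snd p - 1)"

definition I1 :: "pt set" where "I1 = W \<union> up x1 \<union> up x2 \<union> up x3 \<union> up x4"
definition I2 :: "pt set" where "I2 = W \<union> up (dm x1) \<union> up x2 \<union> up x4"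
definition I3 :: "pt set" where "I3 = W \<union> up x1 \<union> up (dm x2) \<union> up x3"
definition J1 :: "pt set" where "J1 = W \<union> up x1 \<union> up x2 \<union> up x3 \<union> up x4"
definition J2 :: "pt set" where "J2 = W \<union> up x1 \<union> up (dm x3) \<union> up x4"
definition J3 :: "pt set" where "J3 = W \<union> up x2 \<union> up x3 \<union> up (dm x4)"

end

theory Submission
  imports Defs
begin


definition fmap :: "nat \<Rightarrow> pt set list \<Rightarrow> (nat \<Rightarrow> nat \<Rightarrow> int) \<Rightarrow> nat \<Rightarrow> pt \<Rightarrow> (nat \<Rightarrow> 'k::field) \<Rightarrow> (nat \<Rightarrow> 'k)" where
  "fmap n Ks F d a x = (\<lambda>j. if j < length Ks \<and> shiftp d a \<in> Ks!j then (\<Sum>i<n. of_int (F j i) * x i) else 0)"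

lemma sum_if_out: "(\<Sum>i\<in>A. if c then f i else 0) = (if c then sum f A else 0)"
  by simp

lemma fmap_morph:
  assumes len: "length Js = n"
    and nat: "\<And>i j a b. i<n \<Longrightarrow> j < length Ks \<Longrightarrow> F j i \<noteq> 0 \<Longrightarrow> le2 a b \<Longrightarrow> a \<in> Js!i \<Longrightarrow>
        (shiftp d b \<in> Ks!j \<and> b \<in> Js!i \<longleftrightarrow> shiftp d a \<in> Ks!j \<and> shiftp d b \<in> Ks!j)"
  shows "is_morph (dirsum_intervals Js) (shift_mod d (dirsum_intervals Ks)) (fmap n Ks F d :: pt \<Rightarrow> (nat\<Rightarrow>'k::field) \<Rightarrow> _)"
  unfolding is_morph_def linear_between_def
proof (intro conjI allI impI ballI)
  fix a x
  show "fmap n Ks F d a x \<in> sp (shift_mod d (dirsum_intervals Ks)) a"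
    by (simp add: fmap_def shift_mod_def dirsum_intervals_def)
next
  fix a and x y :: "nat \<Rightarrow> 'k"
  show "fmap n Ks F d a (\<lambda>i. x i + y i) = (\<lambda>i. fmap n Ks F d a x i + fmap n Ks F d a y i)"
    by (auto simp: fmap_def distrib_left sum.distrib fun_eq_iff)
next
  fix a c and x :: "nat \<Rightarrow> 'k"
  show "fmap n Ks F d a (\<lambda>i. c * x i) = (\<lambda>i. c * fmap n Ks F d a x i)"
    by (auto simp: fmap_def sum_distrib_left mult.left_commute fun_eq_iff)
next
  fix a b and x :: "nat \<Rightarrow> 'k"
  assume ab: "le2 a b" and hx: "x \<in> sp (dirsum_intervals Js) a"
  have xz: "x i = 0" if "\<not> (i < n \<and> a \<in> Js!i)" for i
    using hx that len by (auto simp: dirsum_intervals_def)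
  show "fmap n Ks F d b (mp (dirsum_intervals Js) a b x) =
        mp (shift_mod d (dirsum_intervals Ks)) a b (fmap n Ks F d a x)"
  proof (rule ext)
    fix j
    show "fmap n Ks F d b (mp (dirsum_intervals Js) a b x) j =
        mp (shift_mod d (dirsum_intervals Ks)) a b (fmap n Ks F d a x) j"
    proof (cases "j < length Ks \<and> shiftp d b \<in> Ks!j")
      case False
      then show ?thesis by (auto simp: fmap_def shift_mod_def dirsum_intervals_def)
    next
      case True
      have hterm: "of_int (F j i) * (if i < length Js \<and> a \<in> Js!i \<and> b \<in> Js!i then x i else 0)
         = (if shiftp d a \<in> Ks!j then of_int (F j i) * x i else 0)" if "i \<in> {..<n}" for i
      proof (cases "x i = 0")
        case True then show ?thesis by simp
      next
        case xn: False
        then have ia: "i < n" "a \<in> Js!i" using xz by blast+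
        show ?thesis
        proof (cases "F j i = 0")
          case True then show ?thesis by simp
        next
          case False
          have "b \<in> Js!i \<longleftrightarrow> shiftp d a \<in> Ks!j"
            using nat[OF ia(1) _ False ab ia(2)] True by blast
          then show ?thesis using ia len by auto
        qed
      qed
      have "fmap n Ks F d b (mp (dirsum_intervals Js) a b x) j =
         (\<Sum>i<n. of_int (F j i) * (if i < length Js \<and> a \<in> Js!i \<and> b \<in> Js!i then x i else 0))"
        using True by (simp add: fmap_def dirsum_intervals_def)
      also have "\<dots> = (\<Sum>i<n. if shiftp d a \<in> Ks!j then of_int (F j i) * x i else 0)"
        using hterm by (rule sum.cong[OF refl])
      also have "\<dots> = mp (shift_mod d (dirsum_intervals Ks)) a b (fmap n Ks F d a x) j"
        using True by (simp only: sum_if_out) (auto simp: fmap_def shift_mod_def dirsum_intervals_def)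
      finally show ?thesis .
    qed
  qed
qed

lemma shiftp_shiftp: "shiftp d (shiftp d a) = shiftp (2*d) a"
  by (simp add: shiftp_def)

lemma fmap_comp:
  assumes len: "length Js = n" "length Ks = m"
    and C: "\<And>a i i'. i<n \<Longrightarrow> i'<n \<Longrightarrow> a\<in>Js!i \<Longrightarrow> shiftp (2*d) a \<in> Js!i' \<Longrightarrow>
      (\<Sum>j<m. G i' j * (if shiftp d a \<in> Ks!j then 1 else 0) * F j i) = (if i=i' then 1 else 0)"
  shows "\<forall>a. \<forall>x\<in>sp (dirsum_intervals Js) a. fmap m Js G d (shiftp d a) (fmap n Ks F d a x)
            = mp (dirsum_intervals Js) a (shiftp (2*d) a) (x :: nat \<Rightarrow> 'k::field)"
proof (intro allI ballI ext)
  fix a i' and x :: "nat \<Rightarrow> 'k"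
  assume x: "x \<in> sp (dirsum_intervals Js) a"
  have xz: "x i = 0" if "\<not> (i < n \<and> a \<in> Js!i)" for i
    using x that len by (auto simp: dirsum_intervals_def)
  show "fmap m Js G d (shiftp d a) (fmap n Ks F d a x) i' = mp (dirsum_intervals Js) a (shiftp (2*d) a) x i'"
  proof (cases "i' < n \<and> shiftp (2*d) a \<in> Js!i'")
    case False
    then show ?thesis using len by (auto simp: fmap_def dirsum_intervals_def shiftp_shiftp)
  next
    case True
    have rhs: "mp (dirsum_intervals Js) a (shiftp (2*d) a) x i' = x i'"
      using True xz len by (auto simp: dirsum_intervals_def)
    have step1: "of_int (G i' j) * (if j < length Ks \<and> shiftp d a \<in> Ks!j then (\<Sum>i<n. of_int (F j i) * x i) else 0)
       = (\<Sum>i<n. of_int (G i' j * (if shiftp d a \<in> Ks!j then 1 else 0) * F j i) * x i)"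
      if "j \<in> {..<m}" for j
      using that len by (auto simp: sum_distrib_left mult.assoc)
    have step3: "of_int (\<Sum>j<m. G i' j * (if shiftp d a \<in> Ks!j then 1 else 0) * F j i) * x i
        = (if i = i' then x i else 0)" if "i \<in> {..<n}" for i
    proof (cases "x i = 0")
      case True then show ?thesis by auto
    next
      case False
      then have "i < n" "a \<in> Js!i" using xz by blast+
      then show ?thesis using C[of i i' a] True by simp
    qed
    have "fmap m Js G d (shiftp d a) (fmap n Ks F d a x) i' =
       (\<Sum>j<m. of_int (G i' j) * (if j < length Ks \<and> shiftp d a \<in> Ks!j then (\<Sum>i<n. of_int (F j i) * x i) else 0))"
      using True len by (simp add: fmap_def shiftp_shiftp)
    also have "\<dots> = (\<Sum>j<m. \<Sum>i<n. of_int (G i' j * (if shiftp d a \<in> Ks!j then 1 else 0) * F j i) * x i)"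
      using step1 by (rule sum.cong[OF refl])
    also have "\<dots> = (\<Sum>i<n. \<Sum>j<m. of_int (G i' j * (if shiftp d a \<in> Ks!j then 1 else 0) * F j i) * x i)"
      by (rule sum.swap)
    also have "\<dots> = (\<Sum>i<n. of_int (\<Sum>j<m. G i' j * (if shiftp d a \<in> Ks!j then 1 else 0) * F j i) * x i)"
      by (simp add: sum_distrib_right)
    also have "\<dots> = (\<Sum>i<n. if i = i' then x i else 0)"
      using step3 by (rule sum.cong[OF refl])
    also have "\<dots> = x i'" using True by simp
    finally show ?thesis using rhs by simp
  qed
qed

lemma no_il:
  assumes f: "is_morph (dirsum_intervals Js) (shift_mod d (dirsum_intervals Ks)) f"
    and g: "is_morph (dirsum_intervals Ks) (shift_mod d (dirsum_intervals Js)) g"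
    and c: "\<forall>x\<in>sp (dirsum_intervals Js) a. g (shiftp d a) (f a x) = mp (dirsum_intervals Js) a (shiftp (2*d) a) (x :: nat \<Rightarrow> 'k::field)"
    and i: "i < length Js" "a \<in> Js!i" "shiftp (2*d) a \<in> Js!i"
    and w: "\<forall>j<length Ks. shiftp d a \<notin> Ks!j"
  shows False
proof -
  define e :: "nat \<Rightarrow> 'k" where "e = (\<lambda>k. if k = i then 1 else 0)"
  have e: "e \<in> sp (dirsum_intervals Js) a" using i by (auto simp: e_def dirsum_intervals_def)
  have "f a e \<in> sp (shift_mod d (dirsum_intervals Ks)) a"
    using f e unfolding is_morph_def linear_between_def by blast
  then have "\<forall>j. f a e j \<noteq> 0 \<longrightarrow> j < length Ks \<and> shiftp d a \<in> Ks!j"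
    by (simp add: shift_mod_def dirsum_intervals_def)
  then have fe: "f a e = (\<lambda>_. 0)" using w by (auto simp: fun_eq_iff)
  have z: "(\<lambda>_. 0::'k) \<in> sp (dirsum_intervals Ks) (shiftp d a)" by (simp add: dirsum_intervals_def)
  have lin: "\<forall>c. \<forall>x\<in>sp (dirsum_intervals Ks) (shiftp d a). g (shiftp d a) (\<lambda>i. c * x i) = (\<lambda>i. c * g (shiftp d a) x i)"
    using g unfolding is_morph_def linear_between_def by blast
  have "g (shiftp d a) (\<lambda>i. 0 * (0::'k)) = (\<lambda>i. 0 * g (shiftp d a) (\<lambda>_. 0) i)"
    using lin z by fastforce
  then have g0: "g (shiftp d a) (\<lambda>_. 0) = (\<lambda>_. 0::'k)" by simp
  have "mp (dirsum_intervals Js) a (shiftp (2*d) a) e = (\<lambda>_. 0)" using c e fe g0 by auto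
  then have "mp (dirsum_intervals Js) a (shiftp (2*d) a) e i = 0" by simp
  then show False using i by (simp add: dirsum_intervals_def e_def)
qed

lemma no_interleave:
  assumes "i < length Js" "a \<in> Js!i" "shiftp (2*d) a \<in> Js!i" "\<forall>j<length Ks. shiftp d a \<notin> Ks!j"
  shows "\<not> interleaved d (dirsum_intervals Js :: 'k::field pmod) (dirsum_intervals Ks)"
  using no_il[OF _ _ _ assms] unfolding interleaved_def by blast

lemma no_interleave':
  assumes "i < length Ks" "a \<in> Ks!i" "shiftp (2*d) a \<in> Ks!i" "\<forall>j<length Js. shiftp d a \<notin> Js!j"
  shows "\<not> interleaved d (dirsum_intervals Js :: 'k::field pmod) (dirsum_intervals Ks)"
  using no_il[OF _ _ _ assms] unfolding interleaved_def by blast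

definition nice :: "pt set \<Rightarrow> bool" where
  "nice A \<longleftrightarrow> (\<forall>a\<in>A. le2 a (10,10)) \<and> (\<forall>a b. a\<in>A \<longrightarrow> le2 a b \<longrightarrow> le2 b (10,10) \<longrightarrow> b\<in>A)"
definition Cd :: "pt set \<Rightarrow> pt set \<Rightarrow> nat \<Rightarrow> bool" where
  "Cd A B d \<longleftrightarrow> (\<forall>a\<in>A. le2 (shiftp d a) (10,10) \<longrightarrow> shiftp d a \<in> B)"

lemma nat_from_C:
  assumes "nice A" "nice B" "Cd A B d" "le2 a b" "a \<in> A"
  shows "(shiftp d b \<in> B \<and> b \<in> A \<longleftrightarrow> shiftp d a \<in> B \<and> shiftp d b \<in> B)"
proof
  assume h: "shiftp d b \<in> B \<and> b \<in> A"
  then have "le2 (shiftp d b) (10,10)" using assms(2) by (auto simp: nice_def)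
  then have "le2 (shiftp d a) (10,10)" using assms(4) by (auto simp: le2_def shiftp_def)
  then show "shiftp d a \<in> B \<and> shiftp d b \<in> B" using assms(3,5) h by (auto simp: Cd_def)
next
  assume h: "shiftp d a \<in> B \<and> shiftp d b \<in> B"
  then have "le2 (shiftp d b) (10,10)" using assms(2) by (auto simp: nice_def)
  then have "le2 b (10,10)" by (auto simp: le2_def shiftp_def)
  moreover have "b \<in> A" using assms(1,4,5) \<open>le2 b (10,10)\<close> unfolding nice_def by blast
  ultimately show "shiftp d b \<in> B \<and> b \<in> A" using h by blast
qed

lemma comp_from_C:
  assumes "nice A" "Cd A B d" "a \<in> A" "shiftp (2*d) a \<in> A"
  shows "shiftp d a \<in> B"
proof -
  have "le2 (shiftp (2*d) a) (10,10)" using assms(1,4) by (auto simp: nice_def)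
  then have "le2 (shiftp d a) (10,10)" by (auto simp: le2_def shiftp_def)
  then show ?thesis using assms(2,3) by (auto simp: Cd_def)
qed

lemma interval_il:
  assumes "nice A" "nice B" "Cd A B d" "Cd B A d"
  shows "interleaved d (interval_module A :: 'k::field pmod) (interval_module B)"
proof -
  let ?F = "\<lambda>_ _. 1::int"
  have m1: "is_morph (dirsum_intervals [A]) (shift_mod d (dirsum_intervals [B])) (fmap 1 [B] ?F d :: pt \<Rightarrow> (nat\<Rightarrow>'k) \<Rightarrow> _)"
    by (rule fmap_morph) (auto intro: nat_from_C[OF assms(1,2,3)] dest: nat_from_C[OF assms(1,2,3)])
  have m2: "is_morph (dirsum_intervals [B]) (shift_mod d (dirsum_intervals [A])) (fmap 1 [A] ?F d :: pt \<Rightarrow> (nat\<Rightarrow>'k) \<Rightarrow> _)"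
    by (rule fmap_morph) (auto intro: nat_from_C[OF assms(2,1,4)] dest: nat_from_C[OF assms(2,1,4)])
  have c1: "\<forall>a. \<forall>x\<in>sp (dirsum_intervals [A]) a. fmap 1 [A] ?F d (shiftp d a) (fmap 1 [B] ?F d a x)
            = mp (dirsum_intervals [A]) a (shiftp (2*d) a) (x :: nat \<Rightarrow> 'k)"
    by (rule fmap_comp) (auto dest: comp_from_C[OF assms(1,3)])
  have c2: "\<forall>a. \<forall>x\<in>sp (dirsum_intervals [B]) a. fmap 1 [B] ?F d (shiftp d a) (fmap 1 [A] ?F d a x)
            = mp (dirsum_intervals [B]) a (shiftp (2*d) a) (x :: nat \<Rightarrow> 'k)"
    by (rule fmap_comp) (auto dest: comp_from_C[OF assms(2,4)])
  show ?thesis unfolding interleaved_def interval_module_def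
    using m1 m2 c1 c2 by blast
qed

lemma zero_dirsum: "(zero_module :: 'k::field pmod) = dirsum_intervals []"
  by (auto simp: zero_module_def dirsum_intervals_def fun_eq_iff)



lemma mem_up: "a \<in> up p \<longleftrightarrow> fst p \<le> fst a \<and> snd p \<le> snd a \<and> fst a \<le> 10 \<and> snd a \<le> 10"
  by (auto simp: up_def le2_def)

lemma W_eq: "W = up (8,0) \<union> up (6,2) \<union> up (4,4) \<union> up (2,6) \<union> up (0,8)"
proof -
  have "{0..4::int} = {0,1,2,3,4}" by auto
  then show ?thesis unfolding W_def by auto
qed

lemmas memsimps = I1_def I2_def I3_def J1_def J2_def J3_def W_eq mem_up x1_def x2_def x3_def x4_def dm_def

lemma grid10: "{0..10::int} = {0,1,2,3,4,5,6,7,8,9,10}"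
  unfolding set_upto[symmetric] by (simp del: set_upto add: upto.simps)

lemma nice_up: "nice (up p)" by (auto simp: nice_def up_def le2_def)
lemma nice_Un: "nice A \<Longrightarrow> nice B \<Longrightarrow> nice (A \<union> B)" unfolding nice_def by blast
lemma nice_W: "nice W" unfolding W_eq by (intro nice_Un nice_up)
lemma nice_all: "nice I1" "nice I2" "nice I3" "nice J1" "nice J2" "nice J3"
  unfolding I1_def I2_def I3_def J1_def J2_def J3_def by (intro nice_Un nice_up nice_W)+

definition inbox :: "pt set \<Rightarrow> bool" where
  "inbox A \<longleftrightarrow> (\<forall>a\<in>A. fst a \<in> {0..10} \<and> snd a \<in> {0..10})"

lemma inbox_all: "inbox I1" "inbox I2" "inbox I3" "inbox J1" "inbox J2" "inbox J3"
  by (auto simp: inbox_def memsimps)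

lemma Cd_grid:
  assumes "inbox A" "\<forall>x\<in>{0..10}. \<forall>y\<in>{0..10}. (x,y) \<in> A \<longrightarrow> le2 (shiftp d (x,y)) (10,10) \<longrightarrow> shiftp d (x,y) \<in> B"
  shows "Cd A B d"
  using assms unfolding inbox_def Cd_def by fastforce

lemma Cd_I1_J1_1: "Cd I1 J1 1"
  by (rule Cd_grid[OF inbox_all(1)]) (unfold grid10, simp add: memsimps shiftp_def le2_def)

lemma Cd_J1_I1_1: "Cd J1 I1 1"
  by (rule Cd_grid[OF inbox_all(4)]) (unfold grid10, simp add: memsimps shiftp_def le2_def)

lemma Cd_I1_J2_1: "Cd I1 J2 1"
  by (rule Cd_grid[OF inbox_all(1)]) (unfold grid10, simp add: memsimps shiftp_def le2_def)

lemma Cd_J2_I1_1: "Cd J2 I1 1"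
  by (rule Cd_grid[OF inbox_all(5)]) (unfold grid10, simp add: memsimps shiftp_def le2_def)

lemma Cd_I1_J3_1: "Cd I1 J3 1"
  by (rule Cd_grid[OF inbox_all(1)]) (unfold grid10, simp add: memsimps shiftp_def le2_def)

lemma Cd_J3_I1_1: "Cd J3 I1 1"
  by (rule Cd_grid[OF inbox_all(6)]) (unfold grid10, simp add: memsimps shiftp_def le2_def)

lemma Cd_I2_J1_1: "Cd I2 J1 1"
  by (rule Cd_grid[OF inbox_all(2)]) (unfold grid10, simp add: memsimps shiftp_def le2_def)

lemma Cd_J1_I2_1: "Cd J1 I2 1"
  by (rule Cd_grid[OF inbox_all(4)]) (unfold grid10, simp add: memsimps shiftp_def le2_def)

lemma Cd_I2_J2_1: "Cd I2 J2 1"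
  by (rule Cd_grid[OF inbox_all(2)]) (unfold grid10, simp add: memsimps shiftp_def le2_def)

lemma Cd_J3_I2_1: "Cd J3 I2 1"
  by (rule Cd_grid[OF inbox_all(6)]) (unfold grid10, simp add: memsimps shiftp_def le2_def)

lemma Cd_I3_J1_1: "Cd I3 J1 1"
  by (rule Cd_grid[OF inbox_all(3)]) (unfold grid10, simp add: memsimps shiftp_def le2_def)

lemma Cd_J1_I3_1: "Cd J1 I3 1"
  by (rule Cd_grid[OF inbox_all(4)]) (unfold grid10, simp add: memsimps shiftp_def le2_def)

lemma Cd_J2_I3_1: "Cd J2 I3 1"
  by (rule Cd_grid[OF inbox_all(5)]) (unfold grid10, simp add: memsimps shiftp_def le2_def)

lemma Cd_I3_J3_1: "Cd I3 J3 1"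
  by (rule Cd_grid[OF inbox_all(3)]) (unfold grid10, simp add: memsimps shiftp_def le2_def)

lemma Cd_I1_J1_2: "Cd I1 J1 2"
  by (rule Cd_grid[OF inbox_all(1)]) (unfold grid10, simp add: memsimps shiftp_def le2_def)

lemma Cd_J1_I1_2: "Cd J1 I1 2"
  by (rule Cd_grid[OF inbox_all(4)]) (unfold grid10, simp add: memsimps shiftp_def le2_def)

lemma Cd_I2_J2_2: "Cd I2 J2 2"
  by (rule Cd_grid[OF inbox_all(2)]) (unfold grid10, simp add: memsimps shiftp_def le2_def)

lemma Cd_J2_I2_2: "Cd J2 I2 2"
  by (rule Cd_grid[OF inbox_all(5)]) (unfold grid10, simp add: memsimps shiftp_def le2_def)

lemma Cd_I3_J3_2: "Cd I3 J3 2"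
  by (rule Cd_grid[OF inbox_all(3)]) (unfold grid10, simp add: memsimps shiftp_def le2_def)

lemma Cd_J3_I3_2: "Cd J3 I3 2"
  by (rule Cd_grid[OF inbox_all(6)]) (unfold grid10, simp add: memsimps shiftp_def le2_def)

definition Fm :: "nat \<Rightarrow> nat \<Rightarrow> int" where "Fm j i = [[1,1,1],[1,1,0],[1,0,1]] ! j ! i"
definition Gm :: "nat \<Rightarrow> nat \<Rightarrow> int" where "Gm i j = [[-1,1,1],[1,0,-1],[1,-1,0]] ! i ! j"

lemma all3: "(\<forall>i<(3::nat). P i) \<longleftrightarrow> P 0 \<and> P 1 \<and> P 2"
  by (auto simp: numeral_3_eq_3 numeral_2_eq_2 less_Suc_eq)
lemma sum3: "(\<Sum>j<(3::nat). f j) = f 0 + f 1 + f 2"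
  by (simp add: numeral_3_eq_3 numeral_2_eq_2)

lemma compM_grid: "\<forall>x\<in>{0..10::int}. \<forall>y\<in>{0..10::int}. \<forall>i<3. \<forall>i'<3. (x,y) \<in> [I1,I2,I3]!i \<longrightarrow> shiftp 2 (x,y) \<in> [I1,I2,I3]!i' \<longrightarrow>
   (\<Sum>j<3. Gm i' j * (if shiftp 1 (x,y) \<in> [J1,J2,J3]!j then 1 else 0) * Fm j i) = (if i=i' then 1 else 0)"
  unfolding grid10 all3 sum3 by (simp add: memsimps shiftp_def Fm_def Gm_def)

lemma compN_grid: "\<forall>x\<in>{0..10::int}. \<forall>y\<in>{0..10::int}. \<forall>i<3. \<forall>i'<3. (x,y) \<in> [J1,J2,J3]!i \<longrightarrow> shiftp 2 (x,y) \<in> [J1,J2,J3]!i' \<longrightarrow>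
   (\<Sum>j<3. Fm i' j * (if shiftp 1 (x,y) \<in> [I1,I2,I3]!j then 1 else 0) * Gm j i) = (if i=i' then 1 else 0)"
  unfolding grid10 all3 sum3 by (simp add: memsimps shiftp_def Fm_def Gm_def)

lemma cases3: "i < (3::nat) \<Longrightarrow> i = 0 \<or> i = 1 \<or> i = 2" by auto

lemma F_C: "i < 3 \<Longrightarrow> j < 3 \<Longrightarrow> Fm j i \<noteq> 0 \<Longrightarrow> Cd ([I1,I2,I3]!i) ([J1,J2,J3]!j) 1"
  using cases3[of i] cases3[of j]
  by (auto simp: Fm_def Cd_I1_J1_1[unfolded One_nat_def] Cd_I1_J2_1[unfolded One_nat_def] Cd_I1_J3_1[unfolded One_nat_def] Cd_I2_J1_1[unfolded One_nat_def] Cd_I2_J2_1[unfolded One_nat_def] Cd_I3_J1_1[unfolded One_nat_def] Cd_I3_J3_1[unfolded One_nat_def])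

lemma G_C: "i < 3 \<Longrightarrow> j < 3 \<Longrightarrow> Gm j i \<noteq> 0 \<Longrightarrow> Cd ([J1,J2,J3]!i) ([I1,I2,I3]!j) 1"
  using cases3[of i] cases3[of j]
  by (auto simp: Gm_def Cd_J1_I1_1[unfolded One_nat_def] Cd_J2_I1_1[unfolded One_nat_def] Cd_J3_I1_1[unfolded One_nat_def] Cd_J1_I2_1[unfolded One_nat_def] Cd_J3_I2_1[unfolded One_nat_def] Cd_J1_I3_1[unfolded One_nat_def] Cd_J2_I3_1[unfolded One_nat_def])

lemma nice_I: "i < 3 \<Longrightarrow> nice ([I1,I2,I3]!i)"
  by (auto simp: numeral_3_eq_3 numeral_2_eq_2 less_Suc_eq nice_all)
lemma nice_J: "i < 3 \<Longrightarrow> nice ([J1,J2,J3]!i)"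
  by (auto simp: numeral_3_eq_3 numeral_2_eq_2 less_Suc_eq nice_all)

lemma inbox_I: "i < 3 \<Longrightarrow> inbox ([I1,I2,I3]!i)"
  by (auto simp: numeral_3_eq_3 numeral_2_eq_2 less_Suc_eq inbox_all)
lemma inbox_J: "i < 3 \<Longrightarrow> inbox ([J1,J2,J3]!i)"
  by (auto simp: numeral_3_eq_3 numeral_2_eq_2 less_Suc_eq inbox_all)

lemma MN_il: "interleaved 1 (dirsum_intervals [I1,I2,I3] :: 'k::field pmod) (dirsum_intervals [J1,J2,J3])"
proof -
  have m1: "is_morph (dirsum_intervals [I1,I2,I3]) (shift_mod 1 (dirsum_intervals [J1,J2,J3])) (fmap 3 [J1,J2,J3] Fm 1 :: pt \<Rightarrow> (nat\<Rightarrow>'k) \<Rightarrow> _)"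
    by (rule fmap_morph) (simp, rule nat_from_C[OF nice_I nice_J F_C], auto)
  have m2: "is_morph (dirsum_intervals [J1,J2,J3]) (shift_mod 1 (dirsum_intervals [I1,I2,I3])) (fmap 3 [I1,I2,I3] Gm 1 :: pt \<Rightarrow> (nat\<Rightarrow>'k) \<Rightarrow> _)"
    by (rule fmap_morph) (simp, rule nat_from_C[OF nice_J nice_I G_C], auto)
  have c1: "\<forall>a. \<forall>x\<in>sp (dirsum_intervals [I1,I2,I3]) a. fmap 3 [I1,I2,I3] Gm 1 (shiftp 1 a) (fmap 3 [J1,J2,J3] Fm 1 a x)
            = mp (dirsum_intervals [I1,I2,I3]) a (shiftp (2*1) a) (x :: nat \<Rightarrow> 'k)"
  proof (rule fmap_comp)
    fix a i i' assume h: "i < 3" "i' < 3" "a \<in> [I1,I2,I3]!i" "shiftp (2*1) a \<in> [I1,I2,I3]!i'"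
    obtain x y where a: "a = (x,y)" by fastforce
    have "x \<in> {0..10}" "y \<in> {0..10}" using inbox_I[OF h(1)] h(3) a by (auto simp: inbox_def)
    then show "(\<Sum>j<3. Gm i' j * (if shiftp 1 a \<in> [J1,J2,J3]!j then 1 else 0) * Fm j i) = (if i=i' then 1 else 0)"
      using compM_grid h a by simp
  qed simp_all
  have c2: "\<forall>a. \<forall>x\<in>sp (dirsum_intervals [J1,J2,J3]) a. fmap 3 [J1,J2,J3] Fm 1 (shiftp 1 a) (fmap 3 [I1,I2,I3] Gm 1 a x)
            = mp (dirsum_intervals [J1,J2,J3]) a (shiftp (2*1) a) (x :: nat \<Rightarrow> 'k)"
  proof (rule fmap_comp)
    fix a i i' assume h: "i < 3" "i' < 3" "a \<in> [J1,J2,J3]!i" "shiftp (2*1) a \<in> [J1,J2,J3]!i'"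
    obtain x y where a: "a = (x,y)" by fastforce
    have "x \<in> {0..10}" "y \<in> {0..10}" using inbox_J[OF h(1)] h(3) a by (auto simp: inbox_def)
    then show "(\<Sum>j<3. Fm i' j * (if shiftp 1 a \<in> [I1,I2,I3]!j then 1 else 0) * Gm j i) = (if i=i' then 1 else 0)"
      using compN_grid h a by simp
  qed simp_all
  show ?thesis unfolding interleaved_def using m1 m2 c1 c2 by blast
qed

lemma MN_nil0: "\<not> interleaved 0 (dirsum_intervals [I1,I2,I3] :: 'k::field pmod) (dirsum_intervals [J1,J2,J3])"
proof (rule no_interleave[where i=1 and a="(6,0)"])
  have l: "length [J1,J2,J3] = 3" by simp
  show "\<forall>j<length [J1,J2,J3]. shiftp 0 (6,0) \<notin> [J1,J2,J3]!j"
    unfolding l all3 by (simp add: memsimps shiftp_def)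
qed (simp_all add: memsimps shiftp_def)

lemma nontriv: "\<not> trivial2 TYPE('k::field) 0 I2" "\<not> trivial2 TYPE('k::field) 1 I2" "\<not> trivial2 TYPE('k::field) 1 I3"
  unfolding trivial2_def interval_module_def zero_dirsum
  by (rule no_interleave[where i=0 and a="(4,4)"]; simp add: memsimps shiftp_def)+

lemma nil_I2_0': "\<not> intervals_interleaved TYPE('k::field) 0 I2 J1" "\<not> intervals_interleaved TYPE('k::field) 0 I2 J2"
   "\<not> intervals_interleaved TYPE('k::field) 0 I2 J3"
  unfolding intervals_interleaved_def interval_module_def
  by (rule no_interleave[where i=0 and a="(6,0)"]; simp add: memsimps shiftp_def)+

lemma nil_I2_0: "\<not> intervals_interleaved TYPE('k::field) 0 I2 J"
  if "J \<in> {J1,J2,J3}" for J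
  using that nil_I2_0' by auto

lemma nil1: "\<not> intervals_interleaved TYPE('k::field) 1 I2 J2" "\<not> intervals_interleaved TYPE('k::field) 1 I2 J3"
   "\<not> intervals_interleaved TYPE('k::field) 1 I3 J2" "\<not> intervals_interleaved TYPE('k::field) 1 I3 J3"
  unfolding intervals_interleaved_def interval_module_def
  by (rule no_interleave'[where i=0 and a="(2,4)"] no_interleave[where i=0 and a="(6,0)"]
       no_interleave[where i=0 and a="(4,2)"] no_interleave'[where i=0 and a="(0,6)"];
      simp add: memsimps shiftp_def)+

lemma match2: "matching TYPE('k::field) 2 [I1,I2,I3] [J1,J2,J3]"
proof -
  have il: "intervals_interleaved TYPE('k) 2 ([I1,I2,I3]!i) ([J1,J2,J3]!i)" if "i < 3" for i
  proof -
    have "i = 0 \<or> i = 1 \<or> i = 2" using that by auto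
    then show ?thesis unfolding intervals_interleaved_def
      by (auto intro!: interval_il simp: nice_all Cd_I1_J1_2 Cd_J1_I1_2 Cd_I2_J2_2 Cd_J2_I2_2 Cd_I3_J3_2 Cd_J3_I3_2)
  qed
  show ?thesis unfolding matching_def
  proof (intro exI[of _ "{(0,0),(1,1),(2,2)}"] conjI allI impI)
    show "{(0::nat,0::nat),(1,1),(2,2)} \<subseteq> {..<length [I1,I2,I3]} \<times> {..<length [J1,J2,J3]}" by auto
  next
    show "\<forall>(i, j)\<in>{(0::nat,0::nat),(1,1),(2,2)}. intervals_interleaved TYPE('k) 2 ([I1,I2,I3] ! i) ([J1,J2,J3] ! j)"
      using il[of 0] il[of 1] il[of 2] by auto
  qed (auto simp: numeral_3_eq_3 numeral_2_eq_2 less_Suc_eq)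
qed

lemma nomatch0: "\<not> matching TYPE('k::field) 0 [I1,I2,I3] [J1,J2,J3]"
proof
  assume "matching TYPE('k::field) 0 [I1,I2,I3] [J1,J2,J3]"
  then obtain R :: "(nat\<times>nat) set" where R: "R \<subseteq> {..<length [I1,I2,I3]} \<times> {..<length [J1,J2,J3]}"
    "\<forall>i<length [I1,I2,I3]. \<not> trivial2 TYPE('k) 0 ([I1,I2,I3] ! i) \<longrightarrow> i \<in> Domain R"
    "\<forall>(i, j)\<in>R. intervals_interleaved TYPE('k) 0 ([I1,I2,I3] ! i) ([J1,J2,J3] ! j)"
    unfolding matching_def by blast
  have "1 \<in> Domain R" using R(2) nontriv(1) by auto
  then obtain j where j: "(1,j) \<in> R" by auto
  then have "j < 3" using R(1) by auto
  then have "[J1,J2,J3]!j \<in> {J1,J2,J3}" by (auto simp: numeral_3_eq_3 numeral_2_eq_2 less_Suc_eq)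
  moreover have "intervals_interleaved TYPE('k) 0 I2 ([J1,J2,J3] ! j)" using R(3) j by auto
  ultimately show False using nil_I2_0 by blast
qed

lemma nomatch1: "\<not> matching TYPE('k::field) 1 [I1,I2,I3] [J1,J2,J3]"
proof
  assume "matching TYPE('k::field) 1 [I1,I2,I3] [J1,J2,J3]"
  then obtain R :: "(nat\<times>nat) set" where R: "R \<subseteq> {..<length [I1,I2,I3]} \<times> {..<length [J1,J2,J3]}"
    "\<forall>i i' j. (i, j) \<in> R \<longrightarrow> (i', j) \<in> R \<longrightarrow> i = i'"
    "\<forall>i<length [I1,I2,I3]. \<not> trivial2 TYPE('k) 1 ([I1,I2,I3] ! i) \<longrightarrow> i \<in> Domain R"
    "\<forall>(i, j)\<in>R. intervals_interleaved TYPE('k) 1 ([I1,I2,I3] ! i) ([J1,J2,J3] ! j)"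
    unfolding matching_def by blast
  have "1 \<in> Domain R" using R(3)[rule_format, of 1] nontriv(2) by simp
  then obtain j1 where j1: "(1,j1) \<in> R" by auto
  have "2 \<in> Domain R" using R(3)[rule_format, of 2] nontriv(3) by simp
  then obtain j2 where j2: "(2,j2) \<in> R" by auto
  have "j1 < 3" "j2 < 3" using R(1) j1 j2 by auto
  then have c1: "j1 = 0 \<or> j1 = 1 \<or> j1 = 2" and c2: "j2 = 0 \<or> j2 = 1 \<or> j2 = 2" by auto
  have i1: "intervals_interleaved TYPE('k) 1 I2 ([J1,J2,J3] ! j1)" using R(4) j1 by auto
  have i2: "intervals_interleaved TYPE('k) 1 I3 ([J1,J2,J3] ! j2)" using R(4) j2 by auto
  have "j1 = 0" using c1 i1 nil1(1,2) by auto
  moreover have "j2 = 0" using c2 i2 nil1(3,4) by auto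
  ultimately show False using R(2) j1 j2 by force
qed

lemma enat_inf_eq:
  assumes "P k" "\<And>d. P d \<Longrightarrow> k \<le> d"
  shows "(INF d\<in>{d. P d}. enat d) = enat k"
proof (rule antisym)
  show "(INF d\<in>{d. P d}. enat d) \<le> enat k" using assms(1) by (intro INF_lower) simp
  show "enat k \<le> (INF d\<in>{d. P d}. enat d)" using assms(2) by (intro INF_greatest) simp
qed

theorem mainTheorem8:
  fixes M N :: "'k::field pmod"
  assumes "M = dirsum_intervals [I1, I2, I3]"
      and "N = dirsum_intervals [J1, J2, J3]"
  shows "dI M N = 1 \<and> dB TYPE('k) [I1, I2, I3] [J1, J2, J3] = 2"
proof
  have A: "interleaved 1 M N" using MN_il assms by simp
  have B: "\<not> interleaved 0 M N" using MN_nil0 assms by simp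
  have "dI M N = enat 1" unfolding dI_def
  proof (rule enat_inf_eq)
    show "interleaved 1 M N" by (fact A)
    fix d assume "interleaved d M N" then show "1 \<le> d" using B by (cases d) auto
  qed
  then show "dI M N = 1" by (simp add: one_enat_def)
next
  have "dB TYPE('k) [I1, I2, I3] [J1, J2, J3] = enat 2" unfolding dB_def
  proof (rule enat_inf_eq)
    show "matching TYPE('k) 2 [I1, I2, I3] [J1, J2, J3]" by (rule match2)
    fix d assume "matching TYPE('k) d [I1, I2, I3] [J1, J2, J3]"
    then show "2 \<le> d" using nomatch0 nomatch1
    proof -
      assume m: "matching TYPE('k) d [I1, I2, I3] [J1, J2, J3]"
      show "2 \<le> d"
      proof (rule ccontr)
        assume "\<not> 2 \<le> d"
        then have "d = 0 \<or> d = 1" by auto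
        then show False using m nomatch0 nomatch1 by auto
      qed
    qed
  qed
  then show "dB TYPE('k) [I1, I2, I3] [J1, J2, J3] = 2" by (simp add: numeral_eq_enat)
qed

end
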